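(* Let $\mathbb{F}_{q^m}$ be a field extension of $\mathbb{F}=\mathbb{F}_q$ and let $G_i\in\mathbb{F}_{q^m}^{a_i\times n_i}$, $i=1,2$, be matrices of full row rank. Set $G=\begin{pmatrix}G_1&0\\0&G_2\end{pmatrix}\in\mathbb{F}_{q^m}^{(a_1+a_2)\times(n_1+n_2)}$. Let $\mathcal{M}_i=(\mathbb{F}^{n_i},\rho_i)$ and $\mathcal{N}=(\mathbb{F}^{n_1+n_2},\hat\rho)$ be the $q$-matroids represented by $G_1,G_2$ and $G$. Identify $\mathbb{F}^{n_1+n_2}=\mathbb{F}^{n_1}\oplus\mathbb{F}^{n_2}$ in the natural way. (a) If $F=F_1\oplus F_2$ with $F_i$ a flat of $\mathcal{M}_i$, then $F$ is a flat of $\mathcal{N}$. (b) If $O=O_1\oplus O_2$ with $O_i$ an open space of $\mathcal{M}_i$, then $O$ is an open space of $\mathcal{N}$. As a consequence, $\mathcal{Z}(\mathcal{M}_1\oplus\mathcal{M}_2)\subseteq\mathcal{Z}(\mathcal{N})$, and every independent space of $\mathcal{N}$ is an independent space of $\mathcal{M}_1\oplus\mathcal{M}_2$.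
   Context: A $q$-matroid is $\mathcal{M}=(E,\rho)$, $E$ a finite-dimensional $\mathbb{F}_q$-vector space, $\rho$ from subspaces to $\mathbb{Z}_{\ge0}$ with $0\le\rho(V)\le\dim V$, monotone and submodular. For $G\in\mathbb{F}_{q^m}^{k\times n}$ of rank $k$, the $q$-matroid represented by $G$ is $(\mathbb{F}_q^n,\rho)$ with $\rho(V)=\mathrm{rk}(GY^{\mathsf T})$ where $Y$ is any matrix over $\mathbb{F}_q$ with row space $V$. Independent: $\rho(V)=\dim V$. Circuit: dependent subspace all of whose proper subspaces are independent; open: a sum of circuits (empty sum $=0$). Flat: $\rho(F+\langle x\rangle)>\rho(F)$ for all $x\notin F$. Cyclic core: $\mathrm{cyc}(V)=\{x\in V\mid\rho(W)=\rho(V)\text{ for all }W\le V\text{ with }W+\langle x\rangle=V\}$; cyclic: $\mathrm{cyc}(V)=V$ (equivalently, open). $\mathcal{Z}(\mathcal{M})$: set of cyclic flats. Direct sum: for $E=E_1\oplus E_2$ with projections $\pi_i$, $\mathcal{M}_1\oplus\mathcal{M}_2=(E,\rho)$ where $\rho(V)=\dim V+\min_{X\le V}(\rho_1(\pi_1(X))+\rho_2(\pi_2(X))-\dim X)$. *)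

theory Defs
  imports Main "HOL.Vector_Spaces" "HOL-Library.Function_Algebras"
begin

text \<open>Vectors of F^n are represented as functions nat => 'a vanishing from index n on.\<close>

definition fscale :: "'a::field \<Rightarrow> (nat \<Rightarrow> 'a) \<Rightarrow> (nat \<Rightarrow> 'a)" where
  "fscale c v = (\<lambda>i. c * v i)"

definition Fn :: "nat \<Rightarrow> (nat \<Rightarrow> 'a::field) set" where
  "Fn n = {v. \<forall>i\<ge>n. v i = 0}"

definition fspan :: "(nat \<Rightarrow> 'a::field) set \<Rightarrow> (nat \<Rightarrow> 'a) set" where
  "fspan S = module.span fscale S"

definition fdim :: "(nat \<Rightarrow> 'a::field) set \<Rightarrow> nat" where
  "fdim S = vector_space.dim fscale S"

definition subsp :: "nat \<Rightarrow> (nat \<Rightarrow> 'a::field) set \<Rightarrow> bool" where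
  "subsp n V \<longleftrightarrow> V \<subseteq> Fn n \<and> module.subspace fscale V"

definition qindep :: "nat \<Rightarrow> ((nat \<Rightarrow> 'a::field) set \<Rightarrow> nat) \<Rightarrow> (nat \<Rightarrow> 'a) set \<Rightarrow> bool" where
  "qindep n rho V \<longleftrightarrow> subsp n V \<and> rho V = fdim V"

definition qcircuit :: "nat \<Rightarrow> ((nat \<Rightarrow> 'a::field) set \<Rightarrow> nat) \<Rightarrow> (nat \<Rightarrow> 'a) set \<Rightarrow> bool" where
  "qcircuit n rho C \<longleftrightarrow> subsp n C \<and> \<not> qindep n rho C \<and>
     (\<forall>D. subsp n D \<and> D \<subset> C \<longrightarrow> qindep n rho D)"

text \<open>open space: a sum of circuits (empty sum = zero space)\<close>
definition qopen :: "nat \<Rightarrow> ((nat \<Rightarrow> 'a::field) set \<Rightarrow> nat) \<Rightarrow> (nat \<Rightarrow> 'a) set \<Rightarrow> bool" where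
  "qopen n rho U \<longleftrightarrow> (\<exists>S. (\<forall>C\<in>S. qcircuit n rho C) \<and> U = fspan (\<Union>S))"

definition qflat :: "nat \<Rightarrow> ((nat \<Rightarrow> 'a::field) set \<Rightarrow> nat) \<Rightarrow> (nat \<Rightarrow> 'a) set \<Rightarrow> bool" where
  "qflat n rho F \<longleftrightarrow> subsp n F \<and>
     (\<forall>x \<in> Fn n - F. rho (fspan (insert x F)) > rho F)"

definition qcyc :: "nat \<Rightarrow> ((nat \<Rightarrow> 'a::field) set \<Rightarrow> nat) \<Rightarrow> (nat \<Rightarrow> 'a) set \<Rightarrow> (nat \<Rightarrow> 'a) set" where
  "qcyc n rho V = {x \<in> V. \<forall>W. subsp n W \<and> W \<subseteq> V \<and> fspan (insert x W) = V \<longrightarrow> rho W = rho V}"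

definition qcyclic :: "nat \<Rightarrow> ((nat \<Rightarrow> 'a::field) set \<Rightarrow> nat) \<Rightarrow> (nat \<Rightarrow> 'a) set \<Rightarrow> bool" where
  "qcyclic n rho V \<longleftrightarrow> subsp n V \<and> qcyc n rho V = V"

definition cyclic_flats :: "nat \<Rightarrow> ((nat \<Rightarrow> 'a::field) set \<Rightarrow> nat) \<Rightarrow> (nat \<Rightarrow> 'a) set set" where
  "cyclic_flats n rho = {F. qflat n rho F \<and> qcyclic n rho F}"

definition proj1 :: "nat \<Rightarrow> (nat \<Rightarrow> 'a::zero) \<Rightarrow> (nat \<Rightarrow> 'a)" where
  "proj1 n1 v = (\<lambda>i. if i < n1 then v i else 0)"

definition proj2 :: "nat \<Rightarrow> nat \<Rightarrow> (nat \<Rightarrow> 'a::zero) \<Rightarrow> (nat \<Rightarrow> 'a)" where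
  "proj2 n1 n2 v = (\<lambda>i. if i < n2 then v (n1 + i) else 0)"

definition dsum_space :: "nat \<Rightarrow> nat \<Rightarrow> (nat \<Rightarrow> 'a::field) set \<Rightarrow> (nat \<Rightarrow> 'a) set \<Rightarrow> (nat \<Rightarrow> 'a) set" where
  "dsum_space n1 n2 V1 V2 = {v \<in> Fn (n1 + n2). proj1 n1 v \<in> V1 \<and> proj2 n1 n2 v \<in> V2}"

definition dsum_rank :: "nat \<Rightarrow> ((nat \<Rightarrow> 'a::field) set \<Rightarrow> nat) \<Rightarrow> nat \<Rightarrow> ((nat \<Rightarrow> 'a) set \<Rightarrow> nat)
    \<Rightarrow> (nat \<Rightarrow> 'a) set \<Rightarrow> nat" where
  "dsum_rank n1 rho1 n2 rho2 V = nat (int (fdim V) +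
     Min {int (rho1 (proj1 n1 ` X)) + int (rho2 (proj2 n1 n2 ` X)) - int (fdim X) | X.
            subsp (n1 + n2) X \<and> X \<subseteq> V})"

text \<open>emb : 'a => 'b is a field embedding making 'b an extension of 'a\<close>
definition field_emb :: "('a::field \<Rightarrow> 'b::field) \<Rightarrow> bool" where
  "field_emb emb \<longleftrightarrow> emb 1 = 1 \<and> (\<forall>x y. emb (x + y) = emb x + emb y) \<and>
     (\<forall>x y. emb (x * y) = emb x * emb y)"

text \<open>An a x n matrix over 'b is a function G :: nat => nat => 'b; only entries with
  i < a, j < n matter.\<close>
definition mat_col :: "nat \<Rightarrow> (nat \<Rightarrow> nat \<Rightarrow> 'b::field) \<Rightarrow> nat \<Rightarrow> (nat \<Rightarrow> 'b)" where
  "mat_col a G j = (\<lambda>i. if i < a then G i j else 0)"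

definition mat_rank :: "nat \<Rightarrow> nat \<Rightarrow> (nat \<Rightarrow> nat \<Rightarrow> 'b::field) \<Rightarrow> nat" where
  "mat_rank a n G = fdim (fspan (mat_col a G ` {..<n}))"

definition mat_app :: "('a::field \<Rightarrow> 'b::field) \<Rightarrow> nat \<Rightarrow> nat \<Rightarrow> (nat \<Rightarrow> nat \<Rightarrow> 'b) \<Rightarrow> (nat \<Rightarrow> 'a) \<Rightarrow> (nat \<Rightarrow> 'b)" where
  "mat_app emb a n G y = (\<lambda>i. if i < a then (\<Sum>j<n. G i j * emb (y j)) else 0)"

text \<open>rho(V) = rk(G Y^T), Y with row space V: the column space of G Y^T is the
  span over the extension field of {G y | y in V}.\<close>
definition rep_rank :: "('a::field \<Rightarrow> 'b::field) \<Rightarrow> nat \<Rightarrow> nat \<Rightarrow> (nat \<Rightarrow> nat \<Rightarrow> 'b)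
    \<Rightarrow> (nat \<Rightarrow> 'a) set \<Rightarrow> nat" where
  "rep_rank emb a n G V = fdim (fspan (mat_app emb a n G ` V))"

definition block_diag :: "nat \<Rightarrow> nat \<Rightarrow> (nat \<Rightarrow> nat \<Rightarrow> 'b::field) \<Rightarrow> (nat \<Rightarrow> nat \<Rightarrow> 'b)
    \<Rightarrow> (nat \<Rightarrow> nat \<Rightarrow> 'b)" where
  "block_diag a1 n1 G1 G2 = (\<lambda>i j. if i < a1 then (if j < n1 then G1 i j else 0)
                                   else (if j < n1 then 0 else G2 (i - a1) (j - n1)))"

end

theory Submission
  imports Defs
begin


global_interpretation fv: vector_space "fscale :: 'k::field \<Rightarrow> (nat \<Rightarrow> 'k) \<Rightarrow> (nat \<Rightarrow> 'k)"
  by unfold_locales (auto simp: fscale_def fun_eq_iff algebra_simps)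

lemma fscale_apply: "fscale c v i = c * v i" by (simp add: fscale_def)

lemma fspan_eq: "fspan = fv.span" by (simp add: fspan_def fun_eq_iff)
lemma fdim_eq: "fdim = fv.dim" by (simp add: fdim_def fun_eq_iff)
lemma subsp_iff: "subsp n V \<longleftrightarrow> V \<subseteq> Fn n \<and> fv.subspace V" by (simp add: subsp_def)

lemma finite_Fn: "finite (Fn n :: (nat \<Rightarrow> 'k::{field,finite}) set)"
proof -
  have "inj_on (\<lambda>f. map f [0..<n]) (Fn n :: (nat \<Rightarrow> 'k) set)"
  proof (rule inj_onI)
    fix f g :: "nat \<Rightarrow> 'k" assume "f \<in> Fn n" "g \<in> Fn n" "map f [0..<n] = map g [0..<n]"
    then show "f = g" by (auto simp: Fn_def fun_eq_iff map_eq_conv)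
  qed
  moreover have "(\<lambda>f. map f [0..<n]) ` (Fn n :: (nat \<Rightarrow> 'k) set) \<subseteq> {xs. set xs \<subseteq> UNIV \<and> length xs = n}" by auto
  moreover have "finite {xs::'k list. set xs \<subseteq> UNIV \<and> length xs = n}" by (rule finite_lists_length_eq) simp
  ultimately show ?thesis by (meson finite_imageD finite_subset)
qed

lemma subspace_Fn: "fv.subspace (Fn n)"
  by (auto simp: fv.subspace_def Fn_def fscale_apply)


lemma fin_dim_insert:
  fixes S :: "(nat \<Rightarrow> 'k::field) set"
  assumes "finite S"
  shows "fv.dim (insert x S) = (if x \<in> fv.span S then fv.dim S else Suc (fv.dim S))"
proof -
  obtain B where B: "B \<subseteq> S" "fv.independent B" "S \<subseteq> fv.span B" "card B = fv.dim S"
    using fv.basis_exists by blast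
  have fB: "finite B" using B(1) assms finite_subset by blast
  have spB: "fv.span B = fv.span S"
    using B by (metis fv.span_mono fv.span_span subset_antisym fv.span_minimal fv.subspace_span)
  show ?thesis
  proof (cases "x \<in> fv.span S")
    case True
    then show ?thesis using fv.span_redundant fv.span_eq_dim by metis
  next
    case False
    have "fv.independent (insert x B)" using False spB B(2) fv.independent_insertI by metis
    moreover have "fv.span (insert x B) = fv.span (insert x S)"
      using spB by (metis fv.span_insert)
    ultimately have "fv.dim (insert x S) = card (insert x B)"
      by (metis fv.dim_eq_card)
    moreover have "x \<notin> B" using False B(1) fv.span_superset by blast
    ultimately show ?thesis using False fB B(4) by simp
  qed
qed

lemma fin_dim_mono:
  fixes S T :: "(nat \<Rightarrow> 'k::field) set"
  assumes "finite T" "S \<subseteq> fv.span T"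
  shows "fv.dim S \<le> fv.dim T"
proof -
  obtain B where B: "B \<subseteq> T" "fv.independent B" "T \<subseteq> fv.span B" "card B = fv.dim T"
    using fv.basis_exists by blast
  have fB: "finite B" using B(1) assms finite_subset by blast
  have "S \<subseteq> fv.span B" using assms(2) B(3)
    by (metis fv.span_mono fv.span_span subset_trans)
  then show ?thesis using fv.dim_le_card fB B(4) by metis
qed

lemma fin_dim_subset:
  fixes S T :: "(nat \<Rightarrow> 'k::field) set"
  assumes "finite T" "S \<subseteq> T"
  shows "fv.dim S \<le> fv.dim T"
  using fin_dim_mono assms fv.span_superset by blast

lemma fin_dim_eq_imp:
  fixes A B :: "(nat \<Rightarrow> 'k::field) set"
  assumes "finite B" "A \<subseteq> B" "fv.dim A = fv.dim B"
  shows "B \<subseteq> fv.span A"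
proof
  fix b assume b: "b \<in> B"
  show "b \<in> fv.span A"
  proof (rule ccontr)
    assume "b \<notin> fv.span A"
    then have "fv.dim (insert b A) = Suc (fv.dim A)"
      using fin_dim_insert[of A b] assms finite_subset by (metis)
    moreover have "fv.dim (insert b A) \<le> fv.dim B"
      using fin_dim_subset[of B "insert b A"] assms b by blast
    ultimately show False using assms(3) by simp
  qed
qed

lemma fin_dim_Un:
  fixes A C :: "(nat \<Rightarrow> 'k::field) set"
  assumes "finite A" "finite C"
  shows "fv.dim (A \<union> C) \<le> fv.dim A + fv.dim C"
proof -
  obtain B where B: "B \<subseteq> A" "fv.independent B" "A \<subseteq> fv.span B" "card B = fv.dim A"
    using fv.basis_exists by blast
  obtain D where D: "D \<subseteq> C" "fv.independent D" "C \<subseteq> fv.span D" "card D = fv.dim C"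
    using fv.basis_exists by blast
  have f: "finite B" "finite D" using B(1) D(1) assms finite_subset by blast+
  have "A \<union> C \<subseteq> fv.span (B \<union> D)" using B(3) D(3) fv.span_mono[of B "B \<union> D"] fv.span_mono[of D "B \<union> D"] by blast
  then have "fv.dim (A \<union> C) \<le> card (B \<union> D)" using fv.dim_le_card f by blast
  also have "\<dots> \<le> card B + card D" by (rule card_Un_le)
  finally show ?thesis using B(4) D(4) by simp
qed

lemma fin_dim_Un_card:
  fixes A C :: "(nat \<Rightarrow> 'k::field) set"
  assumes "finite A" "finite C"
  shows "fv.dim (A \<union> C) \<le> fv.dim A + card C"
  using fin_dim_Un[OF assms] fv.dim_le_card'[OF assms(2)] by linarith

lemma semilin_zero:
  fixes f :: "(nat \<Rightarrow> 'k::field) \<Rightarrow> (nat \<Rightarrow> 'l::field)"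
  assumes add: "\<And>x y. f (x + y) = f x + f y"
  shows "f 0 = 0"
  using add[of 0 0] by simp

lemma semilin_span:
  fixes f :: "(nat \<Rightarrow> 'k::field) \<Rightarrow> (nat \<Rightarrow> 'l::field)" and h :: "'k \<Rightarrow> 'l"
  assumes add: "\<And>x y. f (x + y) = f x + f y"
    and sc: "\<And>c x. f (fscale c x) = fscale (h c) (f x)"
  shows "fv.span (f ` fv.span S) = fv.span (f ` S)"
proof
  show "fv.span (f ` S) \<subseteq> fv.span (f ` fv.span S)"
    by (intro fv.span_mono image_mono fv.span_superset)
  have "f ` fv.span S \<subseteq> fv.span (f ` S)"
  proof
    fix y assume "y \<in> f ` fv.span S"
    then obtain x where x: "x \<in> fv.span S" "y = f x" by blast
    have "f x \<in> fv.span (f ` S)"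
      using x(1)
    proof (induction rule: fv.span_induct)
      case base
      have z: "f 0 \<in> fv.span (f ` S)" using semilin_zero[OF add] fv.span_zero by metis
      show ?case
        unfolding fv.subspace_def
        using z by (auto simp: add sc intro: fv.span_add fv.span_scale fv.span_zero)
    next
      case (step x) then show ?case by (intro fv.span_base imageI)
    qed
    then show "y \<in> fv.span (f ` S)" using x by simp
  qed
  then show "fv.span (f ` fv.span S) \<subseteq> fv.span (f ` S)"
    by (metis fv.span_minimal fv.subspace_span)
qed

lemma semilin_dim_span:
  fixes f :: "(nat \<Rightarrow> 'k::field) \<Rightarrow> (nat \<Rightarrow> 'l::field)" and h :: "'k \<Rightarrow> 'l"
  assumes add: "\<And>x y. f (x + y) = f x + f y"
    and sc: "\<And>c x. f (fscale c x) = fscale (h c) (f x)"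
  shows "fv.dim (f ` fv.span S) = fv.dim (f ` S)"
  using semilin_span[OF assms] fv.span_eq_dim by metis

lemma semilin_dim_le:
  fixes f :: "(nat \<Rightarrow> 'k::field) \<Rightarrow> (nat \<Rightarrow> 'l::field)" and h :: "'k \<Rightarrow> 'l"
  assumes add: "\<And>x y. f (x + y) = f x + f y"
    and sc: "\<And>c x. f (fscale c x) = fscale (h c) (f x)"
    and fin: "finite S"
  shows "fv.dim (f ` S) \<le> fv.dim S"
proof -
  obtain B where B: "B \<subseteq> S" "fv.independent B" "S \<subseteq> fv.span B" "card B = fv.dim S"
    using fv.basis_exists by blast
  have fB: "finite B" using B(1) fin finite_subset by blast
  have "f ` S \<subseteq> fv.span (f ` fv.span B)" using B(3) fv.span_superset by blast
  then have "f ` S \<subseteq> fv.span (f ` B)" using semilin_span[OF add sc] by metis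
  then have "fv.dim (f ` S) \<le> card (f ` B)" using fv.dim_le_card fB by blast
  also have "\<dots> \<le> card B" using card_image_le fB by blast
  finally show ?thesis using B(4) by simp
qed


section \<open>Coordinate maps\<close>

definition sh :: "nat \<Rightarrow> (nat \<Rightarrow> 'k::zero) \<Rightarrow> (nat \<Rightarrow> 'k)" where
  "sh k w = (\<lambda>i. if i < k then 0 else w (i - k))"

lemma proj1_add: "proj1 n (x + y) = proj1 n x + (proj1 n y :: nat \<Rightarrow> 'k::field)"
  by (auto simp: proj1_def fun_eq_iff)
lemma proj1_scale: "proj1 n (fscale c x) = fscale c (proj1 n (x :: nat \<Rightarrow> 'k::field))"
  by (auto simp: proj1_def fun_eq_iff fscale_apply)
lemma proj2_add: "proj2 n1 n2 (x + y) = proj2 n1 n2 x + (proj2 n1 n2 y :: nat \<Rightarrow> 'k::field)"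
  by (auto simp: proj2_def fun_eq_iff)
lemma proj2_scale: "proj2 n1 n2 (fscale c x) = fscale c (proj2 n1 n2 (x :: nat \<Rightarrow> 'k::field))"
  by (auto simp: proj2_def fun_eq_iff fscale_apply)
lemma sh_add: "sh n (x + y) = sh n x + (sh n y :: nat \<Rightarrow> 'k::field)"
  by (auto simp: sh_def fun_eq_iff)
lemma sh_scale: "sh n (fscale c x) = fscale c (sh n (x :: nat \<Rightarrow> 'k::field))"
  by (auto simp: sh_def fun_eq_iff fscale_apply)

lemma mh_proj1: "module_hom fscale fscale (proj1 n :: (nat \<Rightarrow> 'k::field) \<Rightarrow> _)"
  by (simp add: module_hom_iff module_iff_vector_space fv.vector_space_axioms proj1_add proj1_scale)
lemma mh_proj2: "module_hom fscale fscale (proj2 n1 n2 :: (nat \<Rightarrow> 'k::field) \<Rightarrow> _)"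
  by (simp add: module_hom_iff module_iff_vector_space fv.vector_space_axioms proj2_add proj2_scale)
lemma mh_sh: "module_hom fscale fscale (sh n :: (nat \<Rightarrow> 'k::field) \<Rightarrow> _)"
  by (simp add: module_hom_iff module_iff_vector_space fv.vector_space_axioms sh_add sh_scale)

lemma proj1_Fn: "proj1 n v \<in> Fn n" by (simp add: proj1_def Fn_def)
lemma proj2_Fn: "proj2 n1 n2 v \<in> Fn n2" by (simp add: proj2_def Fn_def)
lemma proj1_id: "v \<in> Fn n \<Longrightarrow> proj1 n v = v" by (auto simp: proj1_def Fn_def fun_eq_iff)
lemma proj2_Fn1: "v \<in> Fn n1 \<Longrightarrow> proj2 n1 n2 v = 0" by (auto simp: proj2_def Fn_def fun_eq_iff)
lemma proj1_sh: "proj1 n1 (sh n1 w) = 0" by (auto simp: proj1_def sh_def fun_eq_iff)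
lemma proj2_sh: "w \<in> Fn n2 \<Longrightarrow> proj2 n1 n2 (sh n1 w) = w" by (auto simp: proj2_def sh_def Fn_def fun_eq_iff)
lemma sh_Fn: "w \<in> Fn n2 \<Longrightarrow> sh n1 w \<in> Fn (n1 + n2)" by (auto simp: sh_def Fn_def)
lemma Fn_mono: "Fn n1 \<subseteq> Fn (n1 + n2)" by (auto simp: Fn_def)
lemma sh_zero: "sh n 0 = 0" by (auto simp: sh_def fun_eq_iff)
lemma proj1_zero: "proj1 n 0 = 0" by (auto simp: proj1_def fun_eq_iff)
lemma proj2_zero: "proj2 n1 n2 0 = 0" by (auto simp: proj2_def fun_eq_iff)
lemma decomp_vec:
  assumes "v \<in> Fn (n1 + n2)" shows "v = proj1 n1 v + sh n1 (proj2 n1 n2 v)"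
proof (rule ext)
  fix i
  have "n1 + n2 \<le> i \<Longrightarrow> v i = 0" using assms by (simp add: Fn_def)
  then show "v i = (proj1 n1 v + sh n1 (proj2 n1 n2 v)) i"
    by (cases "i < n1") (auto simp: proj1_def proj2_def sh_def)
qed

lemma span_proj1: "fv.span (proj1 n ` S) = proj1 n ` fv.span (S :: (nat \<Rightarrow> 'k::field) set)"
  by (rule module_hom.span_image[OF mh_proj1])
lemma span_proj2: "fv.span (proj2 n1 n2 ` S) = proj2 n1 n2 ` fv.span (S :: (nat \<Rightarrow> 'k::field) set)"
  by (rule module_hom.span_image[OF mh_proj2])
lemma span_sh: "fv.span (sh n ` S) = sh n ` fv.span (S :: (nat \<Rightarrow> 'k::field) set)"
  by (rule module_hom.span_image[OF mh_sh])

lemma subspace_proj1: "fv.subspace S \<Longrightarrow> fv.subspace (proj1 n ` (S :: (nat \<Rightarrow> 'k::field) set))"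
  by (rule module_hom.subspace_image[OF mh_proj1])
lemma subspace_proj2: "fv.subspace S \<Longrightarrow> fv.subspace (proj2 n1 n2 ` (S :: (nat \<Rightarrow> 'k::field) set))"
  by (rule module_hom.subspace_image[OF mh_proj2])
lemma subspace_sh: "fv.subspace S \<Longrightarrow> fv.subspace (sh n ` (S :: (nat \<Rightarrow> 'k::field) set))"
  by (rule module_hom.subspace_image[OF mh_sh])

lemma dim_sh:
  fixes S :: "(nat \<Rightarrow> 'k::field) set"
  assumes "S \<subseteq> Fn m" "finite S"
  shows "fv.dim (sh k ` S) = fv.dim S"
proof -
  have eq: "proj2 k m ` sh k ` S = S"
  proof -
    have "\<And>x. x \<in> S \<Longrightarrow> proj2 k m (sh k x) = x" using assms(1) proj2_sh by blast
    then show ?thesis by (simp add: image_image)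
  qed
  have le1: "fv.dim (proj2 k m ` (sh k ` S)) \<le> fv.dim (sh k ` S)"
    by (rule semilin_dim_le[where h="\<lambda>c. c"]) (simp_all add: proj2_add proj2_scale assms(2))
  have le2: "fv.dim (sh k ` S) \<le> fv.dim S"
    by (rule semilin_dim_le[where h="\<lambda>c. c"]) (simp_all add: sh_add sh_scale assms(2))
  show ?thesis using le1 le2 eq by simp
qed

lemma dsum_subspace:
  fixes V1 V2 :: "(nat \<Rightarrow> 'k::field) set"
  assumes "fv.subspace V1" "fv.subspace V2"
  shows "subsp (n1 + n2) (dsum_space n1 n2 V1 V2)"
proof -
  have F: "fv.subspace (Fn (n1 + n2) :: (nat \<Rightarrow> 'k) set)" by (rule subspace_Fn)
  have "fv.subspace (dsum_space n1 n2 V1 V2)"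
    unfolding fv.subspace_def
  proof (intro conjI ballI allI)
    show "0 \<in> dsum_space n1 n2 V1 V2"
      using assms F by (simp add: dsum_space_def proj1_zero proj2_zero fv.subspace_0)
  next
    fix x y assume "x \<in> dsum_space n1 n2 V1 V2" "y \<in> dsum_space n1 n2 V1 V2"
    then show "x + y \<in> dsum_space n1 n2 V1 V2"
      using assms F by (simp add: dsum_space_def proj1_add proj2_add fv.subspace_add)
  next
    fix c x assume "x \<in> dsum_space n1 n2 V1 V2"
    then show "fscale c x \<in> dsum_space n1 n2 V1 V2"
      using assms F by (simp add: dsum_space_def proj1_scale proj2_scale fv.subspace_scale)
  qed
  then show ?thesis by (simp add: subsp_iff dsum_space_def)
qed

lemma finite_subsp: "subsp n (V :: (nat \<Rightarrow> 'k::{field,finite}) set) \<Longrightarrow> finite V"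
  using finite_Fn finite_subset subsp_iff by metis


section \<open>Matrix maps\<close>

lemma emb0: "field_emb emb \<Longrightarrow> emb 0 = 0"
  unfolding field_emb_def by (metis add_cancel_right_right add_0)

lemma mat_app_add: "field_emb emb \<Longrightarrow>
  mat_app emb a n G (x + y) = mat_app emb a n G x + mat_app emb a n G y"
  by (auto simp: mat_app_def field_emb_def fun_eq_iff distrib_left sum.distrib)

lemma mat_app_scale: "field_emb emb \<Longrightarrow>
  mat_app emb a n G (fscale c x) = fscale (emb c) (mat_app emb a n G x)"
  by (auto simp: mat_app_def field_emb_def fun_eq_iff fscale_apply sum_distrib_left mult.left_commute)

lemma mat_app_Fn: "mat_app emb a n G y \<in> Fn a"
  by (simp add: mat_app_def Fn_def)

lemma mat_app_zero: "field_emb emb \<Longrightarrow> mat_app emb a n G 0 = 0"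
  using semilin_zero[of "mat_app emb a n G"] mat_app_add by blast

lemma sum_split: "(\<Sum>j<(n1::nat)+n2. g j) = (\<Sum>j<n1. g j) + (\<Sum>k<n2. g (n1 + k))"
  by (induct n2) (simp_all add: add_ac)

lemma block_decomp:
  "mat_app emb (a1+a2) (n1+n2) (block_diag a1 n1 G1 G2) v =
   mat_app emb a1 n1 G1 (proj1 n1 v) + sh a1 (mat_app emb a2 n2 G2 (proj2 n1 n2 v))"
proof (rule ext)
  fix i
  have s1: "(\<Sum>j<n1. block_diag a1 n1 G1 G2 i j * emb (v j)) =
      (\<Sum>j<n1. (if i < a1 then G1 i j else 0) * emb (proj1 n1 v j))"
    by (rule sum.cong) (auto simp: block_diag_def proj1_def)
  have s2: "(\<Sum>k<n2. block_diag a1 n1 G1 G2 i (n1 + k) * emb (v (n1 + k))) =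
      (\<Sum>k<n2. (if i < a1 then 0 else G2 (i - a1) k) * emb (proj2 n1 n2 v k))"
    by (rule sum.cong) (auto simp: block_diag_def proj2_def)
  show "mat_app emb (a1+a2) (n1+n2) (block_diag a1 n1 G1 G2) v i =
   (mat_app emb a1 n1 G1 (proj1 n1 v) + sh a1 (mat_app emb a2 n2 G2 (proj2 n1 n2 v))) i"
    unfolding mat_app_def sh_def plus_fun_apply sum_split[of _ n1 n2] s1 s2
    by (cases "i < a1"; cases "i < a1 + a2") auto
qed

lemma rr_eq: "rep_rank emb a n G V = fv.dim (mat_app emb a n G ` V)"
  by (simp add: rep_rank_def fdim_eq fspan_eq)

lemma rr_mono: "finite V' \<Longrightarrow> V \<subseteq> V' \<Longrightarrow> rep_rank emb a n G V \<le> rep_rank emb a n G V'"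
  unfolding rr_eq by (intro fin_dim_subset) auto

lemma rr_span: "field_emb emb \<Longrightarrow> rep_rank emb a n G (fv.span V) = rep_rank emb a n G V"
  unfolding rr_eq by (rule semilin_dim_span[where h=emb]) (simp_all add: mat_app_add mat_app_scale)

lemma rr_insert: "field_emb emb \<Longrightarrow> finite F \<Longrightarrow>
  rep_rank emb a n G (fv.span (insert x F)) =
   (if mat_app emb a n G x \<in> fv.span (mat_app emb a n G ` F) then rep_rank emb a n G F
    else Suc (rep_rank emb a n G F))"
  unfolding rr_span by (simp add: rr_eq fin_dim_insert)

lemma dim_zero: "fv.dim {0 :: nat \<Rightarrow> 'k::field} = 0"
proof -
  have "fv.dim {0 :: nat \<Rightarrow> 'k} = fv.dim (fv.span ({} :: (nat \<Rightarrow> 'k) set))" by simp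
  also have "\<dots> = fv.dim ({} :: (nat \<Rightarrow> 'k) set)" by (rule fv.dim_span)
  also have "\<dots> = 0" using fv.dim_eq_card_independent[OF fv.independent_empty] by simp
  finally show ?thesis .
qed

lemma rr_zero: "field_emb emb \<Longrightarrow> rep_rank emb a n G {0} = 0"
  by (simp add: rr_eq mat_app_zero dim_zero)

lemma codim1:
  fixes e :: "(nat \<Rightarrow> 'k::field) \<Rightarrow> (nat \<Rightarrow> 'k)"
  assumes e: "module_hom fscale fscale e"
    and Z': "fv.subspace Z'" and W: "fv.subspace W"
    and ZW: "\<And>z. z \<in> Z' \<Longrightarrow> e z \<in> fv.span (insert x W)"
    and y: "y \<in> Z'" "e y \<notin> W"
  shows "Z' \<subseteq> fv.span (insert y {w \<in> Z'. e w \<in> W})"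
proof
  fix z assume z: "z \<in> Z'"
  have spW: "fv.span W = W" using W by simp
  obtain c where c: "e z - fscale c x \<in> W" using ZW[OF z] spW fv.span_breakdown_eq by metis
  obtain d where d: "e y - fscale d x \<in> W" using ZW[OF y(1)] spW fv.span_breakdown_eq by metis
  have "d \<noteq> 0"
  proof
    assume "d = 0"
    then have eq: "e y - fscale d x = e y" by (simp add: fun_eq_iff fscale_apply)
    from d have "e y \<in> W" unfolding eq .
    with y(2) show False by contradiction
  qed
  define k where "k = c / d"
  have kd: "k * d = c" using \<open>d \<noteq> 0\<close> by (simp add: k_def)
  have ediff: "e (z - fscale k y) = e z - fscale k (e y)"
    using module_hom.diff[OF e] module_hom.scale[OF e] by metis
  have "e z - fscale k (e y) = (e z - fscale c x) - fscale k (e y - fscale d x)"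
    by (simp add: fun_eq_iff fscale_apply right_diff_distrib mult.assoc[symmetric] kd)
  also have "\<dots> \<in> W" using c d W fv.subspace_diff fv.subspace_scale by blast
  finally have inW: "e (z - fscale k y) \<in> W" using ediff by simp
  have inZ: "z - fscale k y \<in> Z'" using z y(1) Z' fv.subspace_diff fv.subspace_scale by blast
  have "z - fscale k y \<in> fv.span {w \<in> Z'. e w \<in> W}" using inW inZ by (intro fv.span_base) simp
  then show "z \<in> fv.span (insert y {w \<in> Z'. e w \<in> W})" unfolding fv.span_breakdown_eq by (rule exI)
qed

lemma cycD: "qcyclic n rho Z \<Longrightarrow> x \<in> Z \<Longrightarrow> subsp n W \<Longrightarrow> W \<subseteq> Z \<Longrightarrow> fv.span (insert x W) = Z
  \<Longrightarrow> rho W = rho Z"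
proof -
  assume a: "qcyclic n rho Z" "x \<in> Z" "subsp n W" "W \<subseteq> Z" "fv.span (insert x W) = Z"
  then have "x \<in> qcyc n rho Z" by (simp add: qcyclic_def)
  then have "\<forall>W. subsp n W \<and> W \<subseteq> Z \<and> fspan (insert x W) = Z \<longrightarrow> rho W = rho Z"
    by (simp add: qcyc_def)
  then show ?thesis using a(3,4,5) by (simp add: fspan_eq)
qed

lemma cycI: "subsp n Z \<Longrightarrow>
  (\<And>x W. x \<in> Z \<Longrightarrow> subsp n W \<Longrightarrow> W \<subseteq> Z \<Longrightarrow> fv.span (insert x W) = Z \<Longrightarrow> rho W = rho Z)
  \<Longrightarrow> qcyclic n rho Z"
  unfolding qcyclic_def qcyc_def fspan_eq by (intro conjI subset_antisym subsetI) auto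

lemma flatD: "qflat n rho F \<Longrightarrow> x \<in> Fn n \<Longrightarrow> x \<notin> F \<Longrightarrow> rho (fv.span (insert x F)) > rho F"
  unfolding qflat_def fspan_eq by simp

lemma flatI: "subsp n F \<Longrightarrow> (\<And>x. x \<in> Fn n \<Longrightarrow> x \<notin> F \<Longrightarrow> rho (fv.span (insert x F)) > rho F)
  \<Longrightarrow> qflat n rho F"
  unfolding qflat_def fspan_eq by simp

locale bs =
  fixes emb :: "'a::{field,finite} \<Rightarrow> 'b::{field,finite}"
    and G1 G2 :: "nat \<Rightarrow> nat \<Rightarrow> 'b"
    and a1 a2 n1 n2 :: nat
  assumes emb: "field_emb emb"
begin

abbreviation "T1 \<equiv> mat_app emb a1 n1 G1"
abbreviation "T2 \<equiv> mat_app emb a2 n2 G2"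
abbreviation "TN \<equiv> mat_app emb (a1 + a2) (n1 + n2) (block_diag a1 n1 G1 G2)"
abbreviation "r1 \<equiv> rep_rank emb a1 n1 G1"
abbreviation "r2 \<equiv> rep_rank emb a2 n2 G2"
abbreviation "rN \<equiv> rep_rank emb (a1 + a2) (n1 + n2) (block_diag a1 n1 G1 G2)"
abbreviation "rM \<equiv> dsum_rank n1 r1 n2 r2"

lemma TN_Fn1: "v \<in> Fn n1 \<Longrightarrow> TN v = T1 v"
  by (simp add: block_decomp proj1_id proj2_Fn1 mat_app_zero[OF emb] sh_zero)

lemma TN_sh: "w \<in> Fn n2 \<Longrightarrow> TN (sh n1 w) = sh a1 (T2 w)"
  by (simp add: block_decomp proj1_sh proj2_sh mat_app_zero[OF emb])

lemma TN_proj1: "proj1 a1 (TN v) = T1 (proj1 n1 v)"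
  by (simp add: block_decomp proj1_add proj1_sh proj1_id[OF mat_app_Fn])

lemma TN_proj2: "proj2 a1 a2 (TN v) = T2 (proj2 n1 n2 v)"
  by (simp add: block_decomp proj2_add proj2_sh[OF mat_app_Fn] proj2_Fn1[OF mat_app_Fn])

lemma TN_add: "TN (x + y) = TN x + TN y" by (rule mat_app_add[OF emb])
lemma TN_scale: "TN (fscale c x) = fscale (emb c) (TN x)" by (rule mat_app_scale[OF emb])

lemma rN_Fn1: "V \<subseteq> Fn n1 \<Longrightarrow> rN V = r1 V"
proof -
  assume "V \<subseteq> Fn n1"
  then have "TN ` V = T1 ` V" using TN_Fn1 by (auto intro!: image_cong)
  then show ?thesis by (simp add: rr_eq)
qed

lemma rN_sh: "V \<subseteq> Fn n2 \<Longrightarrow> rN (sh n1 ` V) = r2 V"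
proof -
  assume V: "V \<subseteq> Fn n2"
  then have "TN ` sh n1 ` V = sh a1 ` T2 ` V" using TN_sh by (force simp: image_image intro!: image_cong)
  moreover have "finite (T2 ` V)" using V finite_Fn finite_subset by blast
  moreover have "T2 ` V \<subseteq> Fn a2" using mat_app_Fn by blast
  ultimately show ?thesis by (simp add: rr_eq dim_sh)
qed


lemma partA:
  assumes f1: "qflat n1 r1 F1" and f2: "qflat n2 r2 F2"
  shows "qflat (n1 + n2) rN (dsum_space n1 n2 F1 F2)"
proof -
  let ?F = "dsum_space n1 n2 F1 F2"
  have s1: "subsp n1 F1" and s2: "subsp n2 F2" using f1 f2 by (auto simp: qflat_def)
  have fl1: "\<And>y. y \<in> Fn n1 - F1 \<Longrightarrow> r1 (fv.span (insert y F1)) > r1 F1"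
    using f1 by (auto simp: qflat_def fspan_eq)
  have fl2: "\<And>y. y \<in> Fn n2 - F2 \<Longrightarrow> r2 (fv.span (insert y F2)) > r2 F2"
    using f2 by (auto simp: qflat_def fspan_eq)
  have fin1: "finite F1" using s1 finite_subsp by blast
  have fin2: "finite F2" using s2 finite_subsp by blast
  have sub: "subsp (n1 + n2) ?F" using s1 s2 dsum_subspace by (metis subsp_iff)
  have finF: "finite ?F" using sub finite_subsp by blast
  have "rN (fv.span (insert x ?F)) > rN ?F" if x: "x \<in> Fn (n1 + n2) - ?F" for x
  proof -
    have nsp: "TN x \<notin> fv.span (TN ` ?F)"
    proof
      assume inspan: "TN x \<in> fv.span (TN ` ?F)"
      have "proj1 n1 x \<notin> F1 \<or> proj2 n1 n2 x \<notin> F2" using x by (auto simp: dsum_space_def)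
      then show False
      proof
        assume p1: "proj1 n1 x \<notin> F1"
        have "r1 (fv.span (insert (proj1 n1 x) F1)) > r1 F1" using fl1 p1 proj1_Fn by blast
        then have A: "T1 (proj1 n1 x) \<notin> fv.span (T1 ` F1)" using rr_insert[OF emb fin1] by auto
        have "proj1 a1 (TN x) \<in> proj1 a1 ` fv.span (TN ` ?F)" using inspan by blast
        also have "\<dots> = fv.span (proj1 a1 ` TN ` ?F)" by (rule span_proj1[symmetric])
        also have "proj1 a1 ` TN ` ?F = T1 ` proj1 n1 ` ?F" by (simp add: image_image TN_proj1)
        also have "fv.span (T1 ` proj1 n1 ` ?F) \<subseteq> fv.span (T1 ` F1)"
          by (intro fv.span_mono image_mono) (auto simp: dsum_space_def)
        finally show False using A TN_proj1 by simp
      next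
        assume p2: "proj2 n1 n2 x \<notin> F2"
        have "r2 (fv.span (insert (proj2 n1 n2 x) F2)) > r2 F2" using fl2 p2 proj2_Fn by blast
        then have A: "T2 (proj2 n1 n2 x) \<notin> fv.span (T2 ` F2)" using rr_insert[OF emb fin2] by auto
        have "proj2 a1 a2 (TN x) \<in> proj2 a1 a2 ` fv.span (TN ` ?F)" using inspan by blast
        also have "\<dots> = fv.span (proj2 a1 a2 ` TN ` ?F)" by (rule span_proj2[symmetric])
        also have "proj2 a1 a2 ` TN ` ?F = T2 ` proj2 n1 n2 ` ?F" by (simp add: image_image TN_proj2)
        also have "fv.span (T2 ` proj2 n1 n2 ` ?F) \<subseteq> fv.span (T2 ` F2)"
          by (intro fv.span_mono image_mono) (auto simp: dsum_space_def)
        finally show False using A TN_proj2 by simp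
      qed
    qed
    then show ?thesis using rr_insert[OF emb finF] by simp
  qed
  then show ?thesis using sub by (auto simp: qflat_def fspan_eq)
qed


lemma circ1:
  assumes c: "qcircuit n1 r1 C"
  shows "qcircuit (n1 + n2) rN C"
proof -
  have s: "subsp n1 C" and ni: "\<not> qindep n1 r1 C"
    and m: "\<And>D. subsp n1 D \<Longrightarrow> D \<subset> C \<Longrightarrow> qindep n1 r1 D"
    using c by (auto simp: qcircuit_def)
  have CF: "C \<subseteq> Fn n1" using s by (simp add: subsp_iff)
  have s': "subsp (n1 + n2) C" using s Fn_mono by (auto simp: subsp_iff)
  have "\<not> qindep (n1 + n2) rN C" using ni s rN_Fn1[OF CF] by (simp add: qindep_def)
  moreover have "qindep (n1 + n2) rN D" if D: "subsp (n1 + n2) D" "D \<subset> C" for D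
  proof -
    have DF: "D \<subseteq> Fn n1" using D CF by blast
    have "subsp n1 D" using D DF by (simp add: subsp_iff)
    then have "qindep n1 r1 D" using m D by blast
    then show ?thesis using D rN_Fn1[OF DF] by (simp add: qindep_def)
  qed
  ultimately show ?thesis using s' by (simp add: qcircuit_def)
qed

lemma circ2:
  assumes c: "qcircuit n2 r2 C"
  shows "qcircuit (n1 + n2) rN (sh n1 ` C)"
proof -
  have s: "subsp n2 C" and ni: "\<not> qindep n2 r2 C"
    and m: "\<And>D. subsp n2 D \<Longrightarrow> D \<subset> C \<Longrightarrow> qindep n2 r2 D"
    using c by (auto simp: qcircuit_def)
  have CF: "C \<subseteq> Fn n2" using s by (simp add: subsp_iff)
  have finC: "finite C" using s finite_subsp by blast
  have "sh n1 ` C \<subseteq> Fn (n1 + n2)" using CF sh_Fn by blast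
  then have s': "subsp (n1 + n2) (sh n1 ` C)" using s subspace_sh by (auto simp: subsp_iff)
  have "\<not> qindep (n1 + n2) rN (sh n1 ` C)"
    using ni s rN_sh[OF CF] dim_sh[OF CF finC] by (simp add: qindep_def fdim_eq)
  moreover have "qindep (n1 + n2) rN D" if D: "subsp (n1 + n2) D" "D \<subset> sh n1 ` C" for D
  proof -
    let ?D' = "proj2 n1 n2 ` D"
    have hback: "sh n1 (proj2 n1 n2 d) = d" if d: "d \<in> D" for d
    proof -
      obtain c where "c \<in> C" "d = sh n1 c" using d D by blast
      then show ?thesis using CF proj2_sh by (metis subsetD)
    qed
    have "sh n1 ` ?D' = (\<lambda>d. sh n1 (proj2 n1 n2 d)) ` D" by (simp add: image_image)
    also have "\<dots> = (\<lambda>d. d) ` D" using hback by (rule image_cong[OF refl])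
    finally have DD: "D = sh n1 ` ?D'" by simp
    have D'C: "?D' \<subseteq> C"
    proof
      fix y assume "y \<in> ?D'"
      then obtain d where d: "d \<in> D" "y = proj2 n1 n2 d" by blast
      then obtain c where "c \<in> C" "d = sh n1 c" using D by blast
      then show "y \<in> C" using d CF proj2_sh by (metis subsetD)
    qed
    have "?D' \<noteq> C" using DD D by blast
    then have D'C2: "?D' \<subset> C" using D'C by blast
    have D'F: "?D' \<subseteq> Fn n2" using D'C CF by blast
    have "fv.subspace D" using D(1) by (simp add: subsp_iff)
    then have "fv.subspace ?D'" by (rule subspace_proj2)
    then have "subsp n2 ?D'" using D'F by (simp add: subsp_iff)
    then have "qindep n2 r2 ?D'" using m D'C2 by blast
    moreover have "finite ?D'" using finC D'C finite_subset by blast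
    ultimately have "rN (sh n1 ` ?D') = fdim (sh n1 ` ?D')"
      using rN_sh[OF D'F] dim_sh[OF D'F] by (simp add: qindep_def fdim_eq)
    then show ?thesis using D DD by (simp add: qindep_def)
  qed
  ultimately show ?thesis using s' by (simp add: qcircuit_def)
qed

lemma partB:
  assumes o1: "qopen n1 r1 O1" and o2: "qopen n2 r2 O2"
  shows "qopen (n1 + n2) rN (dsum_space n1 n2 O1 O2)"
proof -
  obtain S1 where S1: "\<forall>C\<in>S1. qcircuit n1 r1 C" "O1 = fv.span (\<Union>S1)"
    using o1 by (auto simp: qopen_def fspan_eq)
  obtain S2 where S2: "\<forall>C\<in>S2. qcircuit n2 r2 C" "O2 = fv.span (\<Union>S2)"
    using o2 by (auto simp: qopen_def fspan_eq)
  define S where "S = S1 \<union> (\<lambda>C. sh n1 ` C) ` S2"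
  have circ: "\<forall>C\<in>S. qcircuit (n1 + n2) rN C"
    using S1(1) S2(1) circ1 circ2 by (auto simp: S_def)
  have US: "\<Union>S = \<Union>S1 \<union> sh n1 ` \<Union>S2" by (auto simp: S_def)
  have U1: "\<Union>S1 \<subseteq> Fn n1" using S1(1) by (auto simp: qcircuit_def subsp_iff)
  have U2: "\<Union>S2 \<subseteq> Fn n2" using S2(1) by (auto simp: qcircuit_def subsp_iff)
  have "dsum_space n1 n2 O1 O2 = fv.span (\<Union>S)"
  proof
    show "dsum_space n1 n2 O1 O2 \<subseteq> fv.span (\<Union>S)"
    proof
      fix v assume v: "v \<in> dsum_space n1 n2 O1 O2"
      then have vF: "v \<in> Fn (n1 + n2)" and p1: "proj1 n1 v \<in> fv.span (\<Union>S1)"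
        and p2: "proj2 n1 n2 v \<in> fv.span (\<Union>S2)"
        using S1 S2 by (auto simp: dsum_space_def)
      have a: "proj1 n1 v \<in> fv.span (\<Union>S)"
        using p1 fv.span_mono[of "\<Union>S1" "\<Union>S"] US by blast
      have "sh n1 (proj2 n1 n2 v) \<in> sh n1 ` fv.span (\<Union>S2)" using p2 by blast
      also have "\<dots> = fv.span (sh n1 ` \<Union>S2)" by (rule span_sh[symmetric])
      also have "\<dots> \<subseteq> fv.span (\<Union>S)" using US by (intro fv.span_mono) blast
      finally have b: "sh n1 (proj2 n1 n2 v) \<in> fv.span (\<Union>S)" .
      show "v \<in> fv.span (\<Union>S)"
        using fv.span_add[OF a b] decomp_vec[OF vF] by simp
    qed
  next
    have sub: "fv.subspace (dsum_space n1 n2 O1 O2)"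
      using dsum_subspace[of O1 O2 n1 n2] S1 S2 by (simp add: subsp_iff)
    have "\<Union>S \<subseteq> dsum_space n1 n2 O1 O2"
    proof
      fix u assume "u \<in> \<Union>S"
      then have "u \<in> \<Union>S1 \<or> u \<in> sh n1 ` \<Union>S2" using US by blast
      then show "u \<in> dsum_space n1 n2 O1 O2"
      proof
        assume u: "u \<in> \<Union>S1"
        then have uF: "u \<in> Fn n1" using U1 by blast
        then show ?thesis using u Fn_mono S1 S2
          by (auto simp: dsum_space_def proj1_id proj2_Fn1 fv.span_zero fv.span_base)
      next
        assume "u \<in> sh n1 ` \<Union>S2"
        then obtain w where w: "w \<in> \<Union>S2" "u = sh n1 w" by blast
        then have wF: "w \<in> Fn n2" using U2 by blast
        then show ?thesis using w sh_Fn S1 S2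
          by (auto simp: dsum_space_def proj1_sh proj2_sh fv.span_zero fv.span_base)
      qed
    qed
    then show "fv.span (\<Union>S) \<subseteq> dsum_space n1 n2 O1 O2"
      using sub fv.span_minimal by blast
  qed
  then show ?thesis using circ by (auto simp: qopen_def fspan_eq)
qed


definition gval :: "(nat \<Rightarrow> 'a) set \<Rightarrow> int" where
  "gval X = int (r1 (proj1 n1 ` X)) + int (r2 (proj2 n1 n2 ` X)) - int (fdim X)"

abbreviation "subs V \<equiv> {X. subsp (n1 + n2) X \<and> X \<subseteq> V}"

lemma rM_eq: "rM V = nat (int (fdim V) + Min (gval ` subs V))"
  unfolding dsum_rank_def gval_def by (simp add: setcompr_eq_image)

lemma subs_fin: "finite (gval ` subs V)"
proof -
  have "subs V \<subseteq> Pow (Fn (n1 + n2))" by (auto simp: subsp_iff)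
  then show ?thesis using finite_Fn finite_subset by (metis finite_Pow_iff finite_imageI)
qed

lemma Min_le_g: "subsp (n1 + n2) X \<Longrightarrow> X \<subseteq> V \<Longrightarrow> Min (gval ` subs V) \<le> gval X"
  using subs_fin by (intro Min_le) auto

lemma Min_obt:
  assumes "subsp (n1 + n2) V"
  obtains X where "subsp (n1 + n2) X" "X \<subseteq> V" "Min (gval ` subs V) = gval X"
proof -
  have "gval ` subs V \<noteq> {}" using assms by blast
  then have "Min (gval ` subs V) \<in> gval ` subs V" using subs_fin Min_in by blast
  then show ?thesis using that by blast
qed

lemma rM_le: "subsp (n1 + n2) V \<Longrightarrow> rM V \<le> r1 (proj1 n1 ` V) + r2 (proj2 n1 n2 ` V)"
  using Min_le_g[of V V] unfolding rM_eq gval_def by simp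

lemma rN_le_split:
  assumes X: "subsp (n1 + n2) X"
  shows "rN X \<le> r1 (proj1 n1 ` X) + r2 (proj2 n1 n2 ` X)"
proof -
  let ?A = "T1 ` proj1 n1 ` X" and ?B = "sh a1 ` T2 ` proj2 n1 n2 ` X"
  have finX: "finite X" using X finite_subsp by blast
  have "TN ` X \<subseteq> fv.span (?A \<union> ?B)"
  proof
    fix y assume "y \<in> TN ` X"
    then obtain x where x: "x \<in> X" "y = TN x" by blast
    have "T1 (proj1 n1 x) \<in> fv.span (?A \<union> ?B)" using x by (intro fv.span_base) blast
    moreover have "sh a1 (T2 (proj2 n1 n2 x)) \<in> fv.span (?A \<union> ?B)" using x by (intro fv.span_base) blast
    ultimately show "y \<in> fv.span (?A \<union> ?B)" using x block_decomp fv.span_add by metis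
  qed
  then have "fv.dim (TN ` X) \<le> fv.dim (?A \<union> ?B)" using finX by (intro fin_dim_mono) auto
  also have "\<dots> \<le> fv.dim ?A + fv.dim ?B" using finX by (intro fin_dim_Un) auto
  also have "fv.dim ?B = fv.dim (T2 ` proj2 n1 n2 ` X)"
    using finX mat_app_Fn by (intro dim_sh) auto
  finally show ?thesis by (simp add: rr_eq)
qed

lemma rN_drop:
  assumes V: "subsp (n1 + n2) V" and XV: "X \<subseteq> V"
  shows "rN V + fdim X \<le> rN X + fdim V"
proof -
  have finV: "finite V" using V finite_subsp by blast
  obtain BX where BX: "BX \<subseteq> X" "fv.independent BX" "X \<subseteq> fv.span BX" "card BX = fv.dim X"
    using fv.basis_exists by blast
  obtain BV where BV: "BX \<subseteq> BV" "BV \<subseteq> V" "fv.independent BV" "V \<subseteq> fv.span BV"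
    using fv.maximal_independent_subset_extend[of BX V] BX XV by blast
  have cBV: "card BV = fv.dim V" using BV fv.basis_card_eq_dim by blast
  have finBV: "finite BV" using BV finV finite_subset by blast
  have finX: "finite X" using XV finV finite_subset by blast
  have "TN ` V \<subseteq> fv.span (TN ` fv.span BV)" using BV(4) fv.span_superset by blast
  also have "\<dots> = fv.span (TN ` BV)" by (rule semilin_span[where h=emb]) (simp_all add: TN_add TN_scale)
  also have "\<dots> \<subseteq> fv.span (TN ` X \<union> TN ` (BV - BX))" using BX(1) by (intro fv.span_mono) blast
  finally have "fv.dim (TN ` V) \<le> fv.dim (TN ` X \<union> TN ` (BV - BX))"
    using finX finBV by (intro fin_dim_mono) auto
  also have "\<dots> \<le> fv.dim (TN ` X) + card (TN ` (BV - BX))"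
    using finX finBV by (intro fin_dim_Un_card) auto
  also have "card (TN ` (BV - BX)) \<le> card (BV - BX)" using finBV by (intro card_image_le) auto
  also have "card (BV - BX) = card BV - card BX" using BV(1) finBV finite_subset card_Diff_subset by metis
  finally have "fv.dim (TN ` V) \<le> fv.dim (TN ` X) + (card BV - card BX)" by simp
  moreover have "card BX \<le> card BV" using BV(1) finBV card_mono by blast
  ultimately show ?thesis using cBV BX(4) by (simp add: rr_eq fdim_eq)
qed

lemma partD:
  assumes ind: "qindep (n1 + n2) rN V"
  shows "qindep (n1 + n2) rM V"
proof -
  have V: "subsp (n1 + n2) V" and eq: "rN V = fdim V" using ind by (auto simp: qindep_def)
  have finV: "finite V" using V finite_subsp by blast
  have ge: "0 \<le> gval X" if X: "subsp (n1 + n2) X" "X \<subseteq> V" for X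
  proof -
    have "rN V + fdim X \<le> rN X + fdim V" using rN_drop V X by blast
    then have "fdim X \<le> rN X" using eq by simp
    moreover have "rN X \<le> r1 (proj1 n1 ` X) + r2 (proj2 n1 n2 ` X)" using rN_le_split X by blast
    ultimately show ?thesis by (simp add: gval_def)
  qed
  have z: "subsp (n1 + n2) {0}" by (simp add: subsp_iff Fn_def)
  have z2: "{0} \<subseteq> V" using V fv.subspace_0 by (auto simp: subsp_iff)
  have g0: "gval {0} = 0"
    by (simp add: gval_def proj1_zero proj2_zero rr_zero[OF emb] fdim_eq dim_zero)
  have "Min (gval ` subs V) = 0"
  proof (rule Min_eqI)
    show "finite (gval ` subs V)" by (rule subs_fin)
    show "\<And>y. y \<in> gval ` subs V \<Longrightarrow> 0 \<le> y" using ge by blast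
    show "0 \<in> gval ` subs V" using z z2 g0 by force
  qed
  then have "rM V = fdim V" by (simp add: rM_eq)
  then show ?thesis using V by (simp add: qindep_def)
qed


end

context bs begin

lemma stepA:
  assumes Zc: "Z \<in> cyclic_flats (n1 + n2) rM"
  shows "rM Z = r1 (proj1 n1 ` Z) + r2 (proj2 n1 n2 ` Z)"
proof -
  have Zs: "subsp (n1 + n2) Z" and cyc: "qcyclic (n1 + n2) rM Z"
    using Zc by (auto simp: cyclic_flats_def qcyclic_def)
  have ZS: "fv.subspace Z" using Zs by (simp add: subsp_iff)
  have finZ: "finite Z" using Zs finite_subsp by blast
  obtain X where X: "subsp (n1 + n2) X" "X \<subseteq> Z" "Min (gval ` subs Z) = gval X"
    using Min_obt[OF Zs] by blast
  have "X = Z"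
  proof (rule ccontr)
    assume XZ: "X \<noteq> Z"
    define P where "P = {W. fv.subspace W \<and> X \<subseteq> W \<and> W \<subseteq> Z \<and> W \<noteq> Z}"
    have finP: "finite P"
    proof -
      have "P \<subseteq> Pow Z" by (auto simp: P_def)
      then show ?thesis by (rule finite_subset) (simp add: finZ)
    qed
    have XP: "X \<in> P" using X XZ by (simp add: subsp_iff P_def)
    then have Pne: "P \<noteq> {}" by blast
    obtain W where W: "W \<in> P" and maxW: "\<forall>W'\<in>P. W \<le> W' \<longrightarrow> W = W'"
      using finite_has_maximal[OF finP Pne] by (rule bexE)
    have WS: "fv.subspace W" and XW: "X \<subseteq> W" and WZ: "W \<subseteq> Z" and WnZ: "W \<noteq> Z"
      using W by (auto simp: P_def)
    obtain x where x: "x \<in> Z" "x \<notin> W" using WZ WnZ by blast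
    let ?W' = "fv.span (insert x W)"
    have W'Z: "?W' \<subseteq> Z" using x WZ ZS by (intro fv.span_minimal) auto
    have WW': "W \<subseteq> ?W'" using fv.span_superset by blast
    have xW': "x \<in> ?W'" using fv.span_superset by blast
    have W'eq: "?W' = Z"
    proof (rule ccontr)
      assume "?W' \<noteq> Z"
      then have "?W' \<in> P" using W'Z WW' XW by (auto simp: P_def)
      then have "W = ?W'" using maxW WW' by simp
      then show False using x xW' by blast
    qed
    have Ws: "subsp (n1 + n2) W" using WS WZ Zs by (auto simp: subsp_iff)
    have eqr: "rM W = rM Z" using cycD[OF cyc x(1) Ws WZ W'eq] .
    have finW: "finite W" using Ws finite_subsp by blast
    have "fv.dim Z = fv.dim (insert x W)" using W'eq fv.dim_span by metis
    also have "\<dots> = Suc (fv.dim W)"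
    proof -
      have spW: "fv.span W = W" using WS by simp
      have "x \<notin> fv.span W" unfolding spW by (rule x(2))
      then show ?thesis using fin_dim_insert[OF finW] by simp
    qed
    finally have dZ: "fdim Z = Suc (fdim W)" by (simp add: fdim_eq)
    have dX: "fdim X \<le> fdim W" using fin_dim_subset[OF finW XW] by (simp add: fdim_eq)
    have g: "gval X \<ge> - int (fdim X)" by (simp add: gval_def)
    have r1: "rM W \<le> nat (int (fdim W) + gval X)"
      using Min_le_g[OF X(1) XW] unfolding rM_eq by simp
    have r2: "rM Z = nat (int (fdim Z) + gval X)" using X(3) by (simp add: rM_eq)
    have pos: "int (fdim W) + gval X \<ge> 0" using g dX by linarith
    have "int (rM W) \<le> int (fdim W) + gval X" using r1 pos by linarith
    moreover have "int (rM Z) = int (fdim W) + gval X + 1" using r2 dZ pos by simp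
    ultimately show False using eqr by linarith
  qed
  then show ?thesis using X(3) by (simp add: rM_eq gval_def)
qed


lemma partC:
  assumes Zc: "Z \<in> cyclic_flats (n1 + n2) rM"
  shows "Z \<in> cyclic_flats (n1 + n2) rN"
proof -
  have Zs: "subsp (n1 + n2) Z" and cyc: "qcyclic (n1 + n2) rM Z" and flat: "qflat (n1 + n2) rM Z"
    using Zc by (auto simp: cyclic_flats_def qcyclic_def)
  have ZS: "fv.subspace Z" and ZF: "Z \<subseteq> Fn (n1 + n2)" using Zs by (auto simp: subsp_iff)
  have finZ: "finite Z" using Zs finite_subsp by blast
  define Z1 where "Z1 = proj1 n1 ` Z"
  define Z2 where "Z2 = proj2 n1 n2 ` Z"
  have rMZ: "rM Z = r1 Z1 + r2 Z2" using stepA[OF Zc] by (simp add: Z1_def Z2_def)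
  have Z1S: "fv.subspace Z1" unfolding Z1_def using ZS by (rule subspace_proj1)
  have Z2S: "fv.subspace Z2" unfolding Z2_def using ZS by (rule subspace_proj2)
  have Z1s: "subsp n1 Z1" using Z1S proj1_Fn by (auto simp: subsp_iff Z1_def)
  have Z2s: "subsp n2 Z2" using Z2S proj2_Fn by (auto simp: subsp_iff Z2_def)
  have fin1: "finite Z1" using Z1s finite_subsp by blast
  have fin2: "finite Z2" using Z2s finite_subsp by blast
  have Z1F: "Z1 \<subseteq> Fn n1" and Z2F: "Z2 \<subseteq> Fn n2" using Z1s Z2s by (auto simp: subsp_iff)
  have spZ1: "fv.span Z1 = Z1" using Z1S by simp
  have spZ2: "fv.span Z2 = Z2" using Z2S by simp
  have ZD: "Z = dsum_space n1 n2 Z1 Z2"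
  proof
    show "Z \<subseteq> dsum_space n1 n2 Z1 Z2" using ZF by (auto simp: dsum_space_def Z1_def Z2_def)
    show "dsum_space n1 n2 Z1 Z2 \<subseteq> Z"
    proof
      fix v assume v: "v \<in> dsum_space n1 n2 Z1 Z2"
      show "v \<in> Z"
      proof (rule ccontr)
        assume nv: "v \<notin> Z"
        have vF: "v \<in> Fn (n1 + n2)" and p1: "proj1 n1 v \<in> Z1" and p2: "proj2 n1 n2 v \<in> Z2"
          using v by (auto simp: dsum_space_def)
        define Y where "Y = fv.span (insert v Z)"
        have gt: "rM Y > rM Z" using flatD[OF flat vF nv] by (simp add: Y_def)
        have YF: "Y \<subseteq> Fn (n1 + n2)" unfolding Y_def using vF ZF subspace_Fn by (intro fv.span_minimal) auto
        have Ys: "subsp (n1 + n2) Y" using YF by (simp add: subsp_iff Y_def)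
        have le: "rM Y \<le> r1 (proj1 n1 ` Y) + r2 (proj2 n1 n2 ` Y)" by (rule rM_le[OF Ys])
        have "proj1 n1 ` Y = fv.span (proj1 n1 ` insert v Z)" unfolding Y_def by (rule span_proj1[symmetric])
        also have "\<dots> \<subseteq> Z1" using p1 Z1S by (intro fv.span_minimal) (auto simp: Z1_def)
        finally have i1: "proj1 n1 ` Y \<subseteq> Z1" .
        have "proj2 n1 n2 ` Y = fv.span (proj2 n1 n2 ` insert v Z)" unfolding Y_def by (rule span_proj2[symmetric])
        also have "\<dots> \<subseteq> Z2" using p2 Z2S by (intro fv.span_minimal) (auto simp: Z2_def)
        finally have i2: "proj2 n1 n2 ` Y \<subseteq> Z2" .
        have "r1 (proj1 n1 ` Y) \<le> r1 Z1" using rr_mono[OF fin1 i1] .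
        moreover have "r2 (proj2 n1 n2 ` Y) \<le> r2 Z2" using rr_mono[OF fin2 i2] .
        ultimately show False using gt le rMZ by linarith
      qed
    qed
  qed
  have Z1Z: "z \<in> Z" if z: "z \<in> Z1" for z
  proof -
    have zF: "z \<in> Fn n1" using z Z1F by blast
    then have "z \<in> Fn (n1 + n2)" using Fn_mono by blast
    moreover have "proj2 n1 n2 z \<in> Z2" using proj2_Fn1[OF zF] Z2S fv.subspace_0 by simp
    ultimately have "z \<in> dsum_space n1 n2 Z1 Z2" using z proj1_id[OF zF] by (simp add: dsum_space_def)
    then show ?thesis using ZD by simp
  qed
  have Z2Z: "sh n1 z \<in> Z" if z: "z \<in> Z2" for z
  proof -
    have zF: "z \<in> Fn n2" using z Z2F by blast
    then have "sh n1 z \<in> Fn (n1 + n2)" by (rule sh_Fn)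
    moreover have "proj1 n1 (sh n1 z) \<in> Z1" unfolding proj1_sh[of n1 z] using Z1S by (rule fv.subspace_0)
    ultimately have "sh n1 z \<in> dsum_space n1 n2 Z1 Z2" using z proj2_sh[OF zF] by (simp add: dsum_space_def)
    then show ?thesis using ZD by simp
  qed
  have flat1: "qflat n1 r1 Z1"
  proof (rule flatI[OF Z1s])
    fix x assume x: "x \<in> Fn n1" "x \<notin> Z1"
    have xF: "x \<in> Fn (n1 + n2)" using x Fn_mono by blast
    have xZ: "x \<notin> Z"
    proof
      assume "x \<in> Z"
      then have "proj1 n1 x \<in> Z1" by (simp add: Z1_def)
      then show False using x proj1_id[OF x(1)] by metis
    qed
    define Y where "Y = fv.span (insert x Z)"
    have gt: "rM Y > rM Z" using flatD[OF flat xF xZ] by (simp add: Y_def)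
    have YF: "Y \<subseteq> Fn (n1 + n2)" unfolding Y_def using xF ZF subspace_Fn by (intro fv.span_minimal) auto
    have Ys: "subsp (n1 + n2) Y" using YF by (simp add: subsp_iff Y_def)
    have le: "rM Y \<le> r1 (proj1 n1 ` Y) + r2 (proj2 n1 n2 ` Y)" by (rule rM_le[OF Ys])
    have e1: "proj1 n1 ` Y = fv.span (insert x Z1)"
      unfolding Y_def span_proj1[symmetric] using proj1_id[OF x(1)] by (simp add: Z1_def)
    have "proj2 n1 n2 ` Y = fv.span (insert 0 Z2)"
      unfolding Y_def span_proj2[symmetric] using proj2_Fn1[OF x(1)] by (simp add: Z2_def)
    also have "\<dots> = Z2" using spZ2 by simp
    finally have e2: "proj2 n1 n2 ` Y = Z2" .
    show "r1 (fv.span (insert x Z1)) > r1 Z1" using gt le rMZ e1 e2 by simp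
  qed
  have flat2: "qflat n2 r2 Z2"
  proof (rule flatI[OF Z2s])
    fix x assume x: "x \<in> Fn n2" "x \<notin> Z2"
    have xF: "sh n1 x \<in> Fn (n1 + n2)" using x sh_Fn by blast
    have xZ: "sh n1 x \<notin> Z"
    proof
      assume "sh n1 x \<in> Z"
      then have "proj2 n1 n2 (sh n1 x) \<in> Z2" by (simp add: Z2_def)
      then show False using x proj2_sh[OF x(1)] by metis
    qed
    define Y where "Y = fv.span (insert (sh n1 x) Z)"
    have gt: "rM Y > rM Z" using flatD[OF flat xF xZ] by (simp add: Y_def)
    have YF: "Y \<subseteq> Fn (n1 + n2)" unfolding Y_def using xF ZF subspace_Fn by (intro fv.span_minimal) auto
    have Ys: "subsp (n1 + n2) Y" using YF by (simp add: subsp_iff Y_def)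
    have le: "rM Y \<le> r1 (proj1 n1 ` Y) + r2 (proj2 n1 n2 ` Y)" by (rule rM_le[OF Ys])
    have e2: "proj2 n1 n2 ` Y = fv.span (insert x Z2)"
      unfolding Y_def span_proj2[symmetric] using proj2_sh[OF x(1)] by (simp add: Z2_def)
    have "proj1 n1 ` Y = fv.span (insert 0 Z1)"
      unfolding Y_def span_proj1[symmetric] by (simp add: Z1_def proj1_sh)
    also have "\<dots> = Z1" using spZ1 by simp
    finally have e1: "proj1 n1 ` Y = Z1" .
    show "r2 (fv.span (insert x Z2)) > r2 Z2" using gt le rMZ e1 e2 by simp
  qed
  have FnS: "fv.subspace (Fn (n1 + n2) :: (nat \<Rightarrow> 'a) set)" by (rule subspace_Fn)
  have cyc1: "qcyclic n1 r1 Z1"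
  proof (rule cycI[OF Z1s])
    fix x W1 assume x: "x \<in> Z1" and W1s: "subsp n1 W1" and W1Z: "W1 \<subseteq> Z1"
      and sp: "fv.span (insert x W1) = Z1"
    define W where "W = dsum_space n1 n2 W1 Z2"
    have W1S: "fv.subspace W1" using W1s by (simp add: subsp_iff)
    have Ws: "subsp (n1 + n2) W" unfolding W_def using W1S Z2S by (rule dsum_subspace)
    have "W \<subseteq> dsum_space n1 n2 Z1 Z2" using W1Z by (auto simp: W_def dsum_space_def)
    then have WZ: "W \<subseteq> Z" using ZD by simp
    have xZ: "x \<in> Z" using Z1Z[OF x] .
    have xF: "x \<in> Fn n1" using x Z1F by blast
    have xF2: "x \<in> Fn (n1 + n2)" using xF Fn_mono by blast
    have spW1: "fv.span W1 = W1" using W1S by simp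
    have spW: "fv.span (insert x W) = Z"
    proof
      show "fv.span (insert x W) \<subseteq> Z" using xZ WZ ZS by (intro fv.span_minimal) auto
      show "Z \<subseteq> fv.span (insert x W)"
      proof
        fix v assume v: "v \<in> Z"
        have "proj1 n1 v \<in> fv.span (insert x W1)" using v sp by (simp add: Z1_def)
        then obtain k where k: "proj1 n1 v - fscale k x \<in> W1"
          unfolding fv.span_breakdown_eq spW1 by blast
        have vF: "v \<in> Fn (n1 + n2)" using v ZF by blast
        have d1: "v - fscale k x \<in> Fn (n1 + n2)"
          using vF xF2 FnS fv.subspace_diff fv.subspace_scale by blast
        have p1: "proj1 n1 (v - fscale k x) = proj1 n1 v - fscale k x"
          by (simp add: module_hom.diff[OF mh_proj1] module_hom.scale[OF mh_proj1] proj1_id[OF xF])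
        have p2: "proj2 n1 n2 (v - fscale k x) = proj2 n1 n2 v"
          by (simp add: module_hom.diff[OF mh_proj2] module_hom.scale[OF mh_proj2] proj2_Fn1[OF xF])
        have "v - fscale k x \<in> W" using d1 p1 p2 k v by (simp add: W_def dsum_space_def Z2_def)
        then have "v - fscale k x \<in> fv.span W" by (rule fv.span_base)
        then show "v \<in> fv.span (insert x W)" unfolding fv.span_breakdown_eq by (rule exI)
      qed
    qed
    have eq: "rM W = rM Z" by (rule cycD[OF cyc xZ Ws WZ spW])
    have le: "rM W \<le> r1 (proj1 n1 ` W) + r2 (proj2 n1 n2 ` W)" by (rule rM_le[OF Ws])
    have fW1: "finite W1" using W1s finite_subsp by blast
    have m1: "r1 (proj1 n1 ` W) \<le> r1 W1" by (rule rr_mono[OF fW1]) (auto simp: W_def dsum_space_def)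
    have m2: "r2 (proj2 n1 n2 ` W) \<le> r2 Z2" by (rule rr_mono[OF fin2]) (auto simp: W_def dsum_space_def)
    have m3: "r1 W1 \<le> r1 Z1" by (rule rr_mono[OF fin1 W1Z])
    show "r1 W1 = r1 Z1" using eq le m1 m2 m3 rMZ by linarith
  qed
  have cyc2: "qcyclic n2 r2 Z2"
  proof (rule cycI[OF Z2s])
    fix x W2 assume x: "x \<in> Z2" and W2s: "subsp n2 W2" and W2Z: "W2 \<subseteq> Z2"
      and sp: "fv.span (insert x W2) = Z2"
    define W where "W = dsum_space n1 n2 Z1 W2"
    have W2S: "fv.subspace W2" using W2s by (simp add: subsp_iff)
    have Ws: "subsp (n1 + n2) W" unfolding W_def using Z1S W2S by (rule dsum_subspace)
    have "W \<subseteq> dsum_space n1 n2 Z1 Z2" using W2Z by (auto simp: W_def dsum_space_def)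
    then have WZ: "W \<subseteq> Z" using ZD by simp
    have xZ: "sh n1 x \<in> Z" using Z2Z[OF x] .
    have xF: "x \<in> Fn n2" using x Z2F by blast
    have xF2: "sh n1 x \<in> Fn (n1 + n2)" using xF by (rule sh_Fn)
    have spW2: "fv.span W2 = W2" using W2S by simp
    have spW: "fv.span (insert (sh n1 x) W) = Z"
    proof
      show "fv.span (insert (sh n1 x) W) \<subseteq> Z" using xZ WZ ZS by (intro fv.span_minimal) auto
      show "Z \<subseteq> fv.span (insert (sh n1 x) W)"
      proof
        fix v assume v: "v \<in> Z"
        have "proj2 n1 n2 v \<in> fv.span (insert x W2)" using v sp by (simp add: Z2_def)
        then obtain k where k: "proj2 n1 n2 v - fscale k x \<in> W2"
          unfolding fv.span_breakdown_eq spW2 by blast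
        have vF: "v \<in> Fn (n1 + n2)" using v ZF by blast
        have d1: "v - fscale k (sh n1 x) \<in> Fn (n1 + n2)"
          using vF xF2 FnS fv.subspace_diff fv.subspace_scale by blast
        have p1: "proj1 n1 (v - fscale k (sh n1 x)) = proj1 n1 v"
          by (simp add: module_hom.diff[OF mh_proj1] module_hom.scale[OF mh_proj1] proj1_sh)
        have p2: "proj2 n1 n2 (v - fscale k (sh n1 x)) = proj2 n1 n2 v - fscale k x"
          by (simp add: module_hom.diff[OF mh_proj2] module_hom.scale[OF mh_proj2] proj2_sh[OF xF])
        have "v - fscale k (sh n1 x) \<in> W" using d1 p1 p2 k v by (simp add: W_def dsum_space_def Z1_def)
        then have "v - fscale k (sh n1 x) \<in> fv.span W" by (rule fv.span_base)
        then show "v \<in> fv.span (insert (sh n1 x) W)" unfolding fv.span_breakdown_eq by (rule exI)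
      qed
    qed
    have eq: "rM W = rM Z" by (rule cycD[OF cyc xZ Ws WZ spW])
    have le: "rM W \<le> r1 (proj1 n1 ` W) + r2 (proj2 n1 n2 ` W)" by (rule rM_le[OF Ws])
    have fW2: "finite W2" using W2s finite_subsp by blast
    have m1: "r1 (proj1 n1 ` W) \<le> r1 Z1" by (rule rr_mono[OF fin1]) (auto simp: W_def dsum_space_def)
    have m2: "r2 (proj2 n1 n2 ` W) \<le> r2 W2" by (rule rr_mono[OF fW2]) (auto simp: W_def dsum_space_def)
    have m3: "r2 W2 \<le> r2 Z2" by (rule rr_mono[OF fin2 W2Z])
    show "r2 W2 = r2 Z2" using eq le m1 m2 m3 rMZ by linarith
  qed
  have flatN: "qflat (n1 + n2) rN Z" using partA[OF flat1 flat2] ZD by simp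
  have cycN: "qcyclic (n1 + n2) rN Z"
  proof (rule cycI[OF Zs])
    fix x W assume x: "x \<in> Z" and Ws: "subsp (n1 + n2) W" and WZ: "W \<subseteq> Z"
      and sp: "fv.span (insert x W) = Z"
    have WS: "fv.subspace W" using Ws by (simp add: subsp_iff)
    have finW: "finite W" using Ws finite_subsp by blast
    define W1 where "W1 = {w \<in> Z1. w \<in> W}"
    define W2 where "W2 = {w \<in> Z2. sh n1 w \<in> W}"
    have W1Z: "W1 \<subseteq> Z1" and W2Z: "W2 \<subseteq> Z2" by (auto simp: W1_def W2_def)
    have W1W: "W1 \<subseteq> W" by (auto simp: W1_def)
    have W2W: "sh n1 ` W2 \<subseteq> W" by (auto simp: W2_def)
    have W1F: "W1 \<subseteq> Fn n1" using W1Z Z1F by blast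
    have W2F: "W2 \<subseteq> Fn n2" using W2Z Z2F by blast
    have W1S: "fv.subspace W1"
    proof -
      have "W1 = Z1 \<inter> W" by (auto simp: W1_def)
      then show ?thesis using Z1S WS fv.subspace_inter by simp
    qed
    have W2S: "fv.subspace W2"
    proof -
      have "fv.subspace {w. sh n1 w \<in> W}" using module_hom.subspace_linear_preimage[OF mh_sh WS] .
      moreover have "W2 = Z2 \<inter> {w. sh n1 w \<in> W}" by (auto simp: W2_def)
      ultimately show ?thesis using Z2S fv.subspace_inter by simp
    qed
    have W1s: "subsp n1 W1" using W1S W1F by (simp add: subsp_iff)
    have W2s: "subsp n2 W2" using W2S W2F by (simp add: subsp_iff)
    have c1: "T1 ` Z1 \<subseteq> fv.span (T1 ` W1)"
    proof (cases "Z1 \<subseteq> W1")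
      case True
      then show ?thesis using fv.span_superset by blast
    next
      case False
      then obtain y where y: "y \<in> Z1" "y \<notin> W1" by blast
      then have yW: "y \<notin> W" by (simp add: W1_def)
      have "Z1 \<subseteq> fv.span (insert y {w \<in> Z1. w \<in> W})"
        using codim1[OF fv.module_hom_ident[THEN module_hom_linearI] Z1S WS _ y(1)] yW Z1Z sp by blast
      then have "Z1 \<subseteq> fv.span (insert y W1)" by (simp add: W1_def)
      moreover have "fv.span (insert y W1) \<subseteq> Z1" using y(1) W1Z Z1S by (intro fv.span_minimal) auto
      ultimately have eqs: "fv.span (insert y W1) = Z1" by blast
      have "r1 W1 = r1 Z1" by (rule cycD[OF cyc1 y(1) W1s W1Z eqs])
      then show ?thesis using fin_dim_eq_imp[of "T1 ` Z1" "T1 ` W1"] fin1 W1Z by (auto simp: rr_eq)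
    qed
    have c2: "T2 ` Z2 \<subseteq> fv.span (T2 ` W2)"
    proof (cases "Z2 \<subseteq> W2")
      case True
      then show ?thesis using fv.span_superset by blast
    next
      case False
      then obtain y where y: "y \<in> Z2" "y \<notin> W2" by blast
      then have yW: "sh n1 y \<notin> W" by (simp add: W2_def)
      have "Z2 \<subseteq> fv.span (insert y {w \<in> Z2. sh n1 w \<in> W})"
        using codim1[OF mh_sh Z2S WS _ y(1)] yW Z2Z sp by blast
      then have "Z2 \<subseteq> fv.span (insert y W2)" by (simp add: W2_def)
      moreover have "fv.span (insert y W2) \<subseteq> Z2" using y(1) W2Z Z2S by (intro fv.span_minimal) auto
      ultimately have eqs: "fv.span (insert y W2) = Z2" by blast
      have "r2 W2 = r2 Z2" by (rule cycD[OF cyc2 y(1) W2s W2Z eqs])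
      then show ?thesis using fin_dim_eq_imp[of "T2 ` Z2" "T2 ` W2"] fin2 W2Z by (auto simp: rr_eq)
    qed
    have "TN ` Z \<subseteq> fv.span (TN ` W)"
    proof
      fix y assume "y \<in> TN ` Z"
      then obtain z where z: "z \<in> Z" "y = TN z" by blast
      have zF: "z \<in> Fn (n1 + n2)" using z ZF by blast
      have "TN z = TN (proj1 n1 z) + TN (sh n1 (proj2 n1 n2 z))"
        using decomp_vec[OF zF] TN_add by metis
      moreover have "TN (proj1 n1 z) \<in> fv.span (TN ` W)"
      proof -
        have "TN (proj1 n1 z) = T1 (proj1 n1 z)" by (rule TN_Fn1[OF proj1_Fn])
        moreover have "T1 (proj1 n1 z) \<in> fv.span (T1 ` W1)" using c1 z by (auto simp: Z1_def)
        moreover have "T1 ` W1 = TN ` W1" using W1F TN_Fn1 by (auto intro!: image_cong)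
        moreover have "fv.span (TN ` W1) \<subseteq> fv.span (TN ` W)" using W1W by (intro fv.span_mono image_mono)
        ultimately show ?thesis by auto
      qed
      moreover have "TN (sh n1 (proj2 n1 n2 z)) \<in> fv.span (TN ` W)"
      proof -
        have "TN (sh n1 (proj2 n1 n2 z)) = sh a1 (T2 (proj2 n1 n2 z))" by (rule TN_sh[OF proj2_Fn])
        moreover have "T2 (proj2 n1 n2 z) \<in> fv.span (T2 ` W2)" using c2 z by (auto simp: Z2_def)
        then have "sh a1 (T2 (proj2 n1 n2 z)) \<in> sh a1 ` fv.span (T2 ` W2)" by blast
        moreover have "sh a1 ` fv.span (T2 ` W2) = fv.span (sh a1 ` T2 ` W2)" by (rule span_sh[symmetric])
        moreover have "sh a1 ` T2 ` W2 = TN ` sh n1 ` W2"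
        proof -
          have "sh a1 ` T2 ` W2 = (\<lambda>w. sh a1 (T2 w)) ` W2" by (simp add: image_image)
          also have "\<dots> = (\<lambda>w. TN (sh n1 w)) ` W2" using W2F TN_sh by (auto intro!: image_cong)
          also have "\<dots> = TN ` sh n1 ` W2" by (simp add: image_image)
          finally show ?thesis .
        qed
        moreover have "fv.span (TN ` sh n1 ` W2) \<subseteq> fv.span (TN ` W)" using W2W by (intro fv.span_mono image_mono)
        ultimately show ?thesis by auto
      qed
      ultimately show "y \<in> fv.span (TN ` W)" using z fv.span_add by metis
    qed
    then have "rN Z \<le> rN W" using finW by (simp add: rr_eq fin_dim_mono)
    moreover have "rN W \<le> rN Z" by (rule rr_mono[OF finZ WZ])
    ultimately show "rN W = rN Z" by simp
  qed
  show ?thesis using flatN cycN by (simp add: cyclic_flats_def)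
qed

end


theorem theorem6p6:
  fixes emb :: "'a::{field,finite} \<Rightarrow> 'b::{field,finite}"
    and G1 G2 :: "nat \<Rightarrow> nat \<Rightarrow> 'b"
    and a1 a2 n1 n2 :: nat
  assumes emb: "field_emb emb"
    and G1: "mat_rank a1 n1 G1 = a1"
    and G2: "mat_rank a2 n2 G2 = a2"
  defines "rho1 \<equiv> rep_rank emb a1 n1 G1"
    and "rho2 \<equiv> rep_rank emb a2 n2 G2"
    and "rhoN \<equiv> rep_rank emb (a1 + a2) (n1 + n2) (block_diag a1 n1 G1 G2)"
  shows
    "(\<forall>F1 F2. qflat n1 rho1 F1 \<and> qflat n2 rho2 F2 \<longrightarrow>
        qflat (n1 + n2) rhoN (dsum_space n1 n2 F1 F2))
   \<and> (\<forall>O1 O2. qopen n1 rho1 O1 \<and> qopen n2 rho2 O2 \<longrightarrow>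
        qopen (n1 + n2) rhoN (dsum_space n1 n2 O1 O2))
   \<and> cyclic_flats (n1 + n2) (dsum_rank n1 rho1 n2 rho2) \<subseteq> cyclic_flats (n1 + n2) rhoN
   \<and> (\<forall>V. qindep (n1 + n2) rhoN V \<longrightarrow> qindep (n1 + n2) (dsum_rank n1 rho1 n2 rho2) V)"
proof -
  interpret bs emb G1 G2 a1 a2 n1 n2 using emb by (rule bs.intro)
  show ?thesis unfolding rho1_def rho2_def rhoN_def
    using partA partB partC partD by blast
qed

end
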